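(* Let $\Delta,k\in\mathbb{N}$ with $k>6\Delta$. Let $G$ be a graph and $x\in V(G)$ such that $\delta(G-x)\ge (2/3-1/(6\Delta))k$ and $G-x$ is bipartite with parts $Y_1,Y_2$. If $x$ has at least $\Delta$ neighbours in $Y_1$ and at least $\Delta$ neighbours in $Y_2$, then $G$ contains a copy of every tree $T$ with $k$ edges and $\Delta(T)\le\Delta$.
   Context: Graphs are finite and simple; $\delta$ denotes minimum degree. "Contains a copy of $T$" means has a subgraph isomorphic to $T$. *)

theory Defs
  imports Complex_Main
begin

definition sgraph :: "'a set \<Rightarrow> ('a \<Rightarrow> 'a \<Rightarrow> bool) \<Rightarrow> bool" where
  "sgraph V E \<longleftrightarrow> finite V \<and>
     (\<forall>u v. E u v \<longrightarrow> u \<in> V \<and> v \<in> V \<and> u \<noteq> v \<and> E v u)"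

definition nbrs :: "'a set \<Rightarrow> ('a \<Rightarrow> 'a \<Rightarrow> bool) \<Rightarrow> 'a \<Rightarrow> 'a set" where
  "nbrs V E v = {u \<in> V. E v u}"

definition degree :: "'a set \<Rightarrow> ('a \<Rightarrow> 'a \<Rightarrow> bool) \<Rightarrow> 'a \<Rightarrow> nat" where
  "degree V E v = card (nbrs V E v)"

definition edges :: "'a set \<Rightarrow> ('a \<Rightarrow> 'a \<Rightarrow> bool) \<Rightarrow> 'a set set" where
  "edges V E = {{u, v} | u v. u \<in> V \<and> v \<in> V \<and> E u v}"

definition max_degree_le :: "'a set \<Rightarrow> ('a \<Rightarrow> 'a \<Rightarrow> bool) \<Rightarrow> nat \<Rightarrow> bool" where
  "max_degree_le V E d \<longleftrightarrow> (\<forall>v\<in>V. degree V E v \<le> d)"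

definition connected_graph :: "'a set \<Rightarrow> ('a \<Rightarrow> 'a \<Rightarrow> bool) \<Rightarrow> bool" where
  "connected_graph V E \<longleftrightarrow>
     (\<forall>u\<in>V. \<forall>v\<in>V. (\<lambda>a b. a \<in> V \<and> b \<in> V \<and> E a b)\<^sup>*\<^sup>* u v)"

definition has_cycle :: "'a set \<Rightarrow> ('a \<Rightarrow> 'a \<Rightarrow> bool) \<Rightarrow> bool" where
  "has_cycle V E \<longleftrightarrow> (\<exists>cs. length cs \<ge> 3 \<and> distinct cs \<and> set cs \<subseteq> V \<and>
      (\<forall>i. Suc i < length cs \<longrightarrow> E (cs ! i) (cs ! Suc i)) \<and> E (last cs) (hd cs))"

definition is_tree :: "'a set \<Rightarrow> ('a \<Rightarrow> 'a \<Rightarrow> bool) \<Rightarrow> bool" where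
  "is_tree V E \<longleftrightarrow> sgraph V E \<and> V \<noteq> {} \<and> connected_graph V E \<and> \<not> has_cycle V E"

definition contains_copy ::
  "'a set \<Rightarrow> ('a \<Rightarrow> 'a \<Rightarrow> bool) \<Rightarrow> 'b set \<Rightarrow> ('b \<Rightarrow> 'b \<Rightarrow> bool) \<Rightarrow> bool" where
  "contains_copy V E VH EH \<longleftrightarrow> (\<exists>f. inj_on f VH \<and> f ` VH \<subseteq> V \<and>
      (\<forall>u\<in>VH. \<forall>v\<in>VH. EH u v \<longrightarrow> E (f u) (f v)))"

definition bipartite_parts :: "'a set \<Rightarrow> ('a \<Rightarrow> 'a \<Rightarrow> bool) \<Rightarrow> 'a set \<Rightarrow> 'a set \<Rightarrow> bool" where
  "bipartite_parts V E Y1 Y2 \<longleftrightarrow> Y1 \<union> Y2 = V \<and> Y1 \<inter> Y2 = {} \<and>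
     (\<forall>u\<in>Y1. \<forall>v\<in>Y1. \<not> E u v) \<and> (\<forall>u\<in>Y2. \<forall>v\<in>Y2. \<not> E u v)"

end

theory Submission
  imports Defs
begin


lemma tree_leaf:
  assumes T: "is_tree VT ET" and r: "r \<in> VT" and c2: "card VT \<ge> 2"
  shows "\<exists>l p. l \<in> VT \<and> l \<noteq> r \<and> p \<in> VT \<and> ET l p \<and> (\<forall>z. ET l z \<longrightarrow> z = p)"
proof -
  have sg: "sgraph VT ET" and con: "connected_graph VT ET" and nc: "\<not> has_cycle VT ET"
    using T by (auto simp: is_tree_def)
  have fin: "finite VT" using sg by (simp add: sgraph_def)
  have sym: "\<And>a b. ET a b \<Longrightarrow> ET b a" and inV: "\<And>a b. ET a b \<Longrightarrow> a \<in> VT \<and> b \<in> VT"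
    and irr: "\<And>a b. ET a b \<Longrightarrow> a \<noteq> b" using sg by (auto simp: sgraph_def)
  define P where "P = (\<lambda>cs. cs \<noteq> [] \<and> hd cs = r \<and> distinct cs \<and> set cs \<subseteq> VT \<and>
     (\<forall>i. Suc i < length cs \<longrightarrow> ET (cs!i) (cs!Suc i)))"
  obtain w where w: "w \<in> VT" "w \<noteq> r"
  proof -
    have "VT - {r} \<noteq> {}"
    proof
      assume "VT - {r} = {}"
      then have "VT = {r}" using r by auto
      then show False using c2 by simp
    qed
    then show ?thesis using that by blast
  qed
  have "(\<lambda>a b. a \<in> VT \<and> b \<in> VT \<and> ET a b)\<^sup>*\<^sup>* r w" using con r w by (auto simp: connected_graph_def)
  then obtain z where z: "ET r z"
    using w(2) by (cases rule: converse_rtranclpE) auto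
  have P2: "P [r, z]" using z r inV[OF z] irr[OF z] unfolding P_def
    by (auto simp: nth_Cons split: nat.splits)
  have bnd: "\<forall>cs. P cs \<longrightarrow> length cs < card VT + 1"
  proof (intro allI impI)
    fix cs assume "P cs"
    then have "distinct cs" "set cs \<subseteq> VT" by (auto simp: P_def)
    then have "card (set cs) \<le> card VT" using fin by (simp add: card_mono)
    then show "length cs < card VT + 1" using \<open>distinct cs\<close> by (simp add: distinct_card)
  qed
  obtain cs where cs: "P cs" and mx: "\<forall>ds. P ds \<longrightarrow> length ds \<le> length cs"
    using ex_has_greatest_nat[of P "[r,z]" length "card VT + 1"] P2 bnd by blast
  define m where "m = length cs"
  have m2: "m \<ge> 2" using mx P2 m_def by fastforce
  have csP: "cs \<noteq> []" "hd cs = r" "distinct cs" "set cs \<subseteq> VT"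
    "\<And>i. Suc i < m \<Longrightarrow> ET (cs!i) (cs!Suc i)" using cs by (auto simp: P_def m_def)
  define l where "l = cs ! (m - 1)"
  define p where "p = cs ! (m - 2)"
  have lr: "l \<noteq> r"
  proof
    assume "l = r"
    then have "cs ! (m-1) = cs ! 0" using csP(1,2) l_def by (simp add: hd_conv_nth)
    moreover have "m - 1 < length cs" "0 < length cs" using m2 m_def by auto
    ultimately have "m - 1 = 0" using csP(3) nth_eq_iff_index_eq by blast
    then show False using m2 by simp
  qed
  have lV: "l \<in> VT" using csP(4) m2 m_def l_def by auto
  have pV: "p \<in> VT" using csP(4) m2 m_def p_def by auto
  have "Suc (m-2) = m - 1" "Suc (m-2) < m" using m2 by auto
  then have lp: "ET l p" using csP(5)[of "m-2"] sym unfolding l_def p_def by simp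
  have only: "\<forall>y. ET l y \<longrightarrow> y = p"
  proof (intro allI impI)
    fix y assume ly: "ET l y"
    have yin: "y \<in> set cs"
    proof (rule ccontr)
      assume yn: "y \<notin> set cs"
      have "P (cs @ [y])" unfolding P_def
      proof (intro conjI allI impI)
        show "hd (cs @ [y]) = r" using csP by simp
        show "distinct (cs @ [y])" using csP yn by simp
        show "set (cs @ [y]) \<subseteq> VT" using csP inV[OF ly] by auto
        fix i assume i: "Suc i < length (cs @ [y])"
        show "ET ((cs @ [y]) ! i) ((cs @ [y]) ! Suc i)"
        proof (cases "Suc i < m")
          case True then show ?thesis using csP(5) m_def by (simp add: nth_append)
        next
          case False
          then have "i = m - 1" "Suc i = m" using i m_def by auto
          then show ?thesis using ly l_def m_def by (simp add: nth_append)
        qed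
      qed simp
      then show False using mx m_def by fastforce
    qed
    then obtain i where i: "i < m" "cs ! i = y" using m_def by (auto simp: in_set_conv_nth)
    have "i \<noteq> m - 1" using irr[OF ly] i l_def by auto
    moreover have "\<not> i < m - 2"
    proof
      assume im: "i < m - 2"
      define ds where "ds = drop i cs"
      have "has_cycle VT ET" unfolding has_cycle_def
      proof (intro exI[of _ ds] conjI allI impI)
        show "3 \<le> length ds" using im ds_def m_def by simp
        show "distinct ds" using csP ds_def by simp
        show "set ds \<subseteq> VT" using csP ds_def by (meson set_drop_subset subset_trans)
        fix j assume "Suc j < length ds"
        then show "ET (ds ! j) (ds ! Suc j)" using csP(5)[of "i+j"] ds_def m_def by simp
      next
        have "last ds = l" using ds_def l_def m_def im csP(1) by (simp add: last_conv_nth)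
        moreover have "hd ds = y" using ds_def i im m_def by (simp add: hd_drop_conv_nth)
        ultimately show "ET (last ds) (hd ds)" using ly by simp
      qed
      then show False using nc by simp
    qed
    ultimately have "i = m - 2" using i by linarith
    then show "y = p" using i p_def by simp
  qed
  show ?thesis using lV lr pV lp only by blast
qed

lemma tree_remove_leaf:
  assumes T: "is_tree VT ET" and l: "l \<in> VT" "ET l p" "\<forall>z. ET l z \<longrightarrow> z = p"
  shows "is_tree (VT - {l}) (\<lambda>a b. ET a b \<and> a \<noteq> l \<and> b \<noteq> l)"
proof -
  have sg: "sgraph VT ET" and con: "connected_graph VT ET" and nc: "\<not> has_cycle VT ET"
    using T by (auto simp: is_tree_def)
  have sym: "\<And>a b. ET a b \<Longrightarrow> ET b a" and inV: "\<And>a b. ET a b \<Longrightarrow> a \<in> VT \<and> b \<in> VT"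
    and irr: "\<And>a b. ET a b \<Longrightarrow> a \<noteq> b" using sg by (auto simp: sgraph_def)
  define ET' where "ET' = (\<lambda>a b. ET a b \<and> a \<noteq> l \<and> b \<noteq> l)"
  have pl: "p \<noteq> l" "p \<in> VT" using irr[OF l(2)] inV[OF l(2)] by auto
  have sg': "sgraph (VT - {l}) ET'" using sg unfolding sgraph_def ET'_def by auto
  have con': "connected_graph (VT - {l}) ET'"
    unfolding connected_graph_def
  proof (intro ballI)
    fix u w assume u: "u \<in> VT - {l}" and w: "w \<in> VT - {l}"
    let ?R = "\<lambda>a b. a \<in> VT \<and> b \<in> VT \<and> ET a b"
    let ?R' = "\<lambda>a b. a \<in> VT - {l} \<and> b \<in> VT - {l} \<and> ET' a b"
    have "?R\<^sup>*\<^sup>* u w" using con u w by (auto simp: connected_graph_def)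
    then have "(w \<noteq> l \<longrightarrow> ?R'\<^sup>*\<^sup>* u w) \<and> (w = l \<longrightarrow> ?R'\<^sup>*\<^sup>* u p)"
    proof (induction rule: rtranclp_induct)
      case base then show ?case using u by auto
    next
      case (step y z)
      show ?case
      proof (cases "z = l")
        case True
        then have "y = p" using step(2) l(3) sym by blast
        moreover have "y \<noteq> l" using step(2) irr True by blast
        ultimately show ?thesis using step(3) True by auto
      next
        case False
        show ?thesis
        proof (cases "y = l")
          case True
          then have "z = p" using step(2) l(3) by blast
          then show ?thesis using step(3) True False by auto
        next
          case False
          then have "?R' y z" using step(2) \<open>z \<noteq> l\<close> unfolding ET'_def by auto
          moreover have "?R'\<^sup>*\<^sup>* u y" using step(3) False by simp
          ultimately have "?R'\<^sup>*\<^sup>* u z" by (simp add: rtranclp.rtrancl_into_rtrancl)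
          then show ?thesis using \<open>z \<noteq> l\<close> by simp
        qed
      qed
    qed
    then show "?R'\<^sup>*\<^sup>* u w" using w by auto
  qed
  have nc': "\<not> has_cycle (VT - {l}) ET'"
    using nc unfolding has_cycle_def ET'_def by blast
  show ?thesis using sg' con' nc' pl unfolding is_tree_def ET'_def by auto
qed

definition rooted :: "'b set \<Rightarrow> ('b \<Rightarrow> 'b \<Rightarrow> bool) \<Rightarrow> 'b \<Rightarrow> ('b \<Rightarrow> 'b) \<Rightarrow> ('b \<Rightarrow> nat) \<Rightarrow> ('b \<Rightarrow> bool) \<Rightarrow> bool" where
  "rooted VT ET r par rk col \<longleftrightarrow> r \<in> VT \<and>
     (\<forall>y\<in>VT - {r}. par y \<in> VT \<and> rk (par y) < rk y \<and> ET y (par y) \<and> col (par y) \<noteq> col y) \<and>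
     (\<forall>a b. ET a b \<longrightarrow> (a \<noteq> r \<and> par a = b) \<or> (b \<noteq> r \<and> par b = a))"

lemma tree_rooted_aux:
  "\<forall>VT (ET :: 'b \<Rightarrow> 'b \<Rightarrow> bool) r. card VT = n \<longrightarrow> is_tree VT ET \<longrightarrow> r \<in> VT \<longrightarrow>
      (\<exists>par rk col. rooted VT ET r par rk col)"
proof (induction n rule: less_induct)
  case (less n)
  show ?case
  proof (intro allI impI)
    fix VT and ET :: "'b \<Rightarrow> 'b \<Rightarrow> bool" and r
    assume n: "card VT = n" and T: "is_tree VT ET" and r: "r \<in> VT"
    have sg: "sgraph VT ET" using T by (simp add: is_tree_def)
    have fin: "finite VT" using sg by (simp add: sgraph_def)
    have sym: "\<And>a b. ET a b \<Longrightarrow> ET b a" and inV: "\<And>a b. ET a b \<Longrightarrow> a \<in> VT \<and> b \<in> VT"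
      and irr: "\<And>a b. ET a b \<Longrightarrow> a \<noteq> b" using sg by (auto simp: sgraph_def)
    show "\<exists>par rk col. rooted VT ET r par rk col"
    proof (cases "card VT \<ge> 2")
      case False
      then have "card VT \<le> 1" by simp
      then have "VT = {r}" using r fin
        using card_le_Suc0_iff_eq[OF fin] by auto
      then have "\<And>a b. \<not> ET a b" using inV irr by blast
      then have "rooted VT ET r id (\<lambda>_. 0) (\<lambda>_. True)" using r \<open>VT = {r}\<close> by (simp add: rooted_def)
      then show ?thesis by blast
    next
      case True
      obtain l p where l: "l \<in> VT" "l \<noteq> r" "p \<in> VT" "ET l p" "\<forall>z. ET l z \<longrightarrow> z = p"
        using tree_leaf[OF T r True] by blast
      define ET' where "ET' = (\<lambda>a b. ET a b \<and> a \<noteq> l \<and> b \<noteq> l)"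
      have T': "is_tree (VT - {l}) ET'" using tree_remove_leaf[OF T l(1,4,5)] ET'_def by simp
      have c': "card (VT - {l}) < n" using n l(1) fin True by (simp add: card_Diff1_less)
      obtain par rk col where R: "rooted (VT - {l}) ET' r par rk col"
        using less[OF c', rule_format, OF refl T'] r l(2) by blast
      have pl: "p \<noteq> l" using irr[OF l(4)] by blast
      define par2 where "par2 = par(l := p)"
      define rk2 where "rk2 = rk(l := Suc (rk p))"
      define col2 where "col2 = col(l := \<not> col p)"
      have R1: "\<forall>y\<in>VT - {l} - {r}. par y \<in> VT - {l} \<and> rk (par y) < rk y \<and> ET' y (par y) \<and> col (par y) \<noteq> col y"
        and R2: "\<forall>a b. ET' a b \<longrightarrow> (a \<noteq> r \<and> par a = b) \<or> (b \<noteq> r \<and> par b = a)"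
        using R by (auto simp: rooted_def)
      have "rooted VT ET r par2 rk2 col2"
        unfolding rooted_def
      proof (intro conjI ballI allI impI)
        show "r \<in> VT" by (rule r)
        fix y assume y: "y \<in> VT - {r}"
        show "par2 y \<in> VT" "rk2 (par2 y) < rk2 y" "ET y (par2 y)" "col2 (par2 y) \<noteq> col2 y"
        proof -
          have "(par2 y \<in> VT \<and> rk2 (par2 y) < rk2 y \<and> ET y (par2 y) \<and> col2 (par2 y) \<noteq> col2 y)"
          proof (cases "y = l")
            case True
            then show ?thesis using l(3,4) pl unfolding par2_def rk2_def col2_def by simp
          next
            case False
            then have "par y \<in> VT - {l} \<and> rk (par y) < rk y \<and> ET' y (par y) \<and> col (par y) \<noteq> col y"
              using R1 y by auto
            then show ?thesis using False unfolding par2_def rk2_def col2_def ET'_def by auto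
          qed
          then show "par2 y \<in> VT" "rk2 (par2 y) < rk2 y" "ET y (par2 y)" "col2 (par2 y) \<noteq> col2 y" by auto
        qed
      next
        fix a b assume ab: "ET a b"
        show "(a \<noteq> r \<and> par2 a = b) \<or> (b \<noteq> r \<and> par2 b = a)"
        proof (cases "a = l")
          case True then show ?thesis using ab l(2,5) unfolding par2_def by auto
        next
          case False
          show ?thesis
          proof (cases "b = l")
            case True then show ?thesis using sym[OF ab] l(2,5) unfolding par2_def by auto
          next
            case False
            then have "ET' a b" using ab \<open>a \<noteq> l\<close> unfolding ET'_def by auto
            then show ?thesis using R2 False \<open>a \<noteq> l\<close> unfolding par2_def by auto
          qed
        qed
      qed
      then show ?thesis by blast
    qed
  qed
qed

lemma tree_rooted:
  assumes "is_tree VT ET" "r \<in> VT"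
  shows "\<exists>par rk col. rooted VT ET r par rk col"
  using tree_rooted_aux[of "card VT", rule_format, OF refl assms] by blast



locale rtree =
  fixes VT :: "'b set" and ET :: "'b \<Rightarrow> 'b \<Rightarrow> bool" and r :: 'b
    and par :: "'b \<Rightarrow> 'b" and rk :: "'b \<Rightarrow> nat" and col :: "'b \<Rightarrow> bool"
  assumes sg: "sgraph VT ET" and rt: "rooted VT ET r par rk col"
begin

lemma fin: "finite VT" using sg by (simp add: sgraph_def)
lemma sym: "ET a b \<Longrightarrow> ET b a" using sg by (auto simp: sgraph_def)
lemma inV: "ET a b \<Longrightarrow> a \<in> VT \<and> b \<in> VT" using sg by (auto simp: sgraph_def)
lemma irr: "ET a b \<Longrightarrow> a \<noteq> b" using sg by (auto simp: sgraph_def)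
lemma rV: "r \<in> VT" using rt by (simp add: rooted_def)
lemma parV: "y \<in> VT \<Longrightarrow> y \<noteq> r \<Longrightarrow> par y \<in> VT" using rt by (simp add: rooted_def)
lemma par_rk: "y \<in> VT \<Longrightarrow> y \<noteq> r \<Longrightarrow> rk (par y) < rk y" using rt by (simp add: rooted_def)
lemma par_E: "y \<in> VT \<Longrightarrow> y \<noteq> r \<Longrightarrow> ET y (par y)" using rt by (simp add: rooted_def)
lemma par_col: "y \<in> VT \<Longrightarrow> y \<noteq> r \<Longrightarrow> col (par y) \<noteq> col y" using rt by (simp add: rooted_def)
lemma edge_char: "ET a b \<Longrightarrow> (a \<noteq> r \<and> par a = b) \<or> (b \<noteq> r \<and> par b = a)"
  using rt by (simp add: rooted_def)
lemma col_edge: "ET a b \<Longrightarrow> col a \<noteq> col b"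
  using edge_char[of a b] par_col inV by metis

inductive dsc :: "'b \<Rightarrow> 'b \<Rightarrow> bool" where
  base: "u \<in> VT \<Longrightarrow> dsc u u"
| step: "dsc u y \<Longrightarrow> z \<in> VT \<Longrightarrow> z \<noteq> r \<Longrightarrow> par z = y \<Longrightarrow> dsc u z"

definition desc :: "'b \<Rightarrow> 'b set" where "desc u = {y. dsc u y}"
definition children :: "'b \<Rightarrow> 'b set" where "children u = {c \<in> VT. c \<noteq> r \<and> par c = u}"

lemma dsc_VT: "dsc u y \<Longrightarrow> u \<in> VT \<and> y \<in> VT"
  by (induction rule: dsc.induct) auto

lemma dsc_rk: "dsc u y \<Longrightarrow> rk u \<le> rk y \<and> (y \<noteq> u \<longrightarrow> rk u < rk y)"
proof (induction rule: dsc.induct)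
  case (base u) then show ?case by simp
next
  case (step u y z)
  then have "rk y < rk z" using par_rk by blast
  then show ?case using step by auto
qed

lemma dsc_trans: "dsc b c \<Longrightarrow> dsc a b \<Longrightarrow> dsc a c"
  by (induction rule: dsc.induct) (auto intro: dsc.step)

lemma dsc_cases: "dsc u y \<Longrightarrow> y = u \<or> (y \<noteq> r \<and> y \<in> VT \<and> dsc u (par y))"
  by (induction rule: dsc.induct) auto

lemma dsc_lin: "dsc a y \<Longrightarrow> dsc b y \<Longrightarrow> dsc a b \<or> dsc b a"
proof (induction arbitrary: b rule: dsc.induct)
  case (base u) then show ?case by simp
next
  case (step u y z)
  from dsc_cases[OF step.prems] show ?case
  proof
    assume "z = b" then show ?thesis using dsc.step[OF step.hyps] by simp
  next
    assume "z \<noteq> r \<and> z \<in> VT \<and> dsc b (par z)"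
    then show ?thesis using step.IH step.hyps(4) by simp
  qed
qed

lemma children_dsc: "c \<in> children u \<Longrightarrow> dsc u c"
  unfolding children_def using dsc.base dsc.step parV by fastforce

lemma children_VT: "c \<in> children u \<Longrightarrow> c \<in> VT \<and> c \<noteq> r \<and> par c = u"
  unfolding children_def by auto

lemma desc_sub: "desc u \<subseteq> VT" unfolding desc_def using dsc_VT by auto
lemma fin_desc: "finite (desc u)" using desc_sub fin finite_subset by blast
lemma fin_children: "finite (children u)" using fin unfolding children_def by simp

lemma desc_self: "u \<in> VT \<Longrightarrow> u \<in> desc u" unfolding desc_def by (simp add: dsc.base)

lemma desc_decomp:
  assumes u: "u \<in> VT"
  shows "desc u = insert u (\<Union>c\<in>children u. desc c)"
proof
  show "insert u (\<Union>c\<in>children u. desc c) \<subseteq> desc u"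
    using u desc_self children_dsc dsc_trans unfolding desc_def by blast
next
  show "desc u \<subseteq> insert u (\<Union>c\<in>children u. desc c)"
  proof
    fix y assume "y \<in> desc u"
    then have "dsc u y" by (simp add: desc_def)
    then show "y \<in> insert u (\<Union>c\<in>children u. desc c)"
    proof (induction rule: dsc.induct)
      case (base u) then show ?case by simp
    next
      case (step u y z)
      show ?case
      proof (cases "y = u")
        case True
        then have "z \<in> children u" using step unfolding children_def by auto
        then show ?thesis using desc_self step by blast
      next
        case False
        then obtain c where "c \<in> children u" "y \<in> desc c" using step by auto
        then have "z \<in> desc c" using step dsc.step unfolding desc_def by blast
        then show ?thesis using \<open>c \<in> children u\<close> by blast
      qed
    qed
  qed
qed

lemma not_in_child_desc: "c \<in> children u \<Longrightarrow> u \<notin> desc c"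
proof
  assume c: "c \<in> children u" and "u \<in> desc c"
  then have "rk c \<le> rk u" using dsc_rk unfolding desc_def by blast
  moreover have "rk u < rk c" using par_rk[of c] children_VT[OF c] by simp
  ultimately show False by simp
qed

lemma children_disj:
  assumes "c1 \<in> children u" "c2 \<in> children u" "c1 \<noteq> c2"
  shows "desc c1 \<inter> desc c2 = {}"
proof (rule ccontr)
  assume "desc c1 \<inter> desc c2 \<noteq> {}"
  then obtain y where "dsc c1 y" "dsc c2 y" unfolding desc_def by auto
  then have "dsc c1 c2 \<or> dsc c2 c1" using dsc_lin by blast
  then show False
  proof
    assume "dsc c1 c2"
    then have "dsc c1 u" using dsc_cases[of c1 c2] assms children_VT by auto
    then have "rk c1 \<le> rk u" using dsc_rk by blast
    moreover have "rk u < rk c1" using par_rk[of c1] children_VT[OF assms(1)] by simp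
    ultimately show False by simp
  next
    assume "dsc c2 c1"
    then have "dsc c2 u" using dsc_cases[of c2 c1] assms children_VT by auto
    then have "rk c2 \<le> rk u" using dsc_rk by blast
    moreover have "rk u < rk c2" using par_rk[of c2] children_VT[OF assms(2)] by simp
    ultimately show False by simp
  qed
qed

lemma child_card: "c \<in> children u \<Longrightarrow> card (desc c) < card (desc u)"
proof -
  assume c: "c \<in> children u"
  have u: "u \<in> VT" using c children_VT parV by fastforce
  have "desc c \<subseteq> desc u - {u}" using desc_decomp[OF u] c not_in_child_desc by auto
  then have "card (desc c) \<le> card (desc u - {u})" by (intro card_mono) (simp_all add: fin_desc)
  moreover have "card (desc u - {u}) < card (desc u)" by (rule card_Diff1_less[OF fin_desc desc_self[OF u]])
  ultimately show ?thesis by simp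
qed

lemma desc_root: "desc r = VT"
proof
  show "desc r \<subseteq> VT" by (rule desc_sub)
next
  have "\<forall>y. y \<in> VT \<and> rk y = n \<longrightarrow> dsc r y" for n
  proof (induction n rule: less_induct)
    case (less n)
    show ?case
    proof (intro allI impI)
      fix y assume y: "y \<in> VT \<and> rk y = n"
      show "dsc r y"
      proof (cases "y = r")
        case True then show ?thesis using dsc.base rV by simp
      next
        case False
        then have "dsc r (par y)" using less y parV par_rk by blast
        then show ?thesis using dsc.step y False by blast
      qed
    qed
  qed
  then show "VT \<subseteq> desc r" unfolding desc_def by blast
qed

lemma children_nbrs: "children u \<subseteq> nbrs VT ET u"
  unfolding children_def nbrs_def using par_E sym by auto

definition sgn :: "'b \<Rightarrow> int" where "sgn y = (if col y then 1 else -1)"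
definition D :: "'b \<Rightarrow> int" where "D u = (\<Sum>y\<in>desc u. sgn y)"

lemma D_rec: "u \<in> VT \<Longrightarrow> D u = sgn u + (\<Sum>c\<in>children u. D c)"
proof -
  assume u: "u \<in> VT"
  have "u \<notin> (\<Union>c\<in>children u. desc c)" using not_in_child_desc by blast
  then have "D u = sgn u + (\<Sum>y\<in>(\<Union>c\<in>children u. desc c). sgn y)"
    unfolding D_def using desc_decomp[OF u] fin_desc fin_children by simp
  also have "(\<Sum>y\<in>(\<Union>c\<in>children u. desc c). sgn y) = (\<Sum>c\<in>children u. \<Sum>y\<in>desc c. sgn y)"
  proof (rule sum.UNION_disjoint[OF fin_children])
    show "\<forall>i\<in>children u. finite (desc i)" using fin_desc by blast
    show "\<forall>i\<in>children u. \<forall>j\<in>children u. i \<noteq> j \<longrightarrow> desc i \<inter> desc j = {}"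
      using children_disj by blast
  qed
  also have "\<dots> = (\<Sum>c\<in>children u. D c)" unfolding D_def ..
  finally show ?thesis .
qed

lemma card_edges: "card (edges VT ET) = card VT - 1"
proof -
  have "edges VT ET = (\<lambda>y. {y, par y}) ` (VT - {r})"
  proof
    show "edges VT ET \<subseteq> (\<lambda>y. {y, par y}) ` (VT - {r})"
    proof
      fix e assume "e \<in> edges VT ET"
      then obtain a b where e: "e = {a, b}" "a \<in> VT" "b \<in> VT" "ET a b" unfolding edges_def by auto
      from edge_char[OF e(4)] show "e \<in> (\<lambda>y. {y, par y}) ` (VT - {r})"
        using e by (auto simp: insert_commute)
    qed
  next
    show "(\<lambda>y. {y, par y}) ` (VT - {r}) \<subseteq> edges VT ET"
      unfolding edges_def using parV par_E by blast
  qed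
  moreover have "inj_on (\<lambda>y. {y, par y}) (VT - {r})"
  proof (rule inj_onI)
    fix a b assume a: "a \<in> VT - {r}" and b: "b \<in> VT - {r}" and eq: "{a, par a} = {b, par b}"
    show "a = b"
    proof (rule ccontr)
      assume "a \<noteq> b"
      then have ab: "a = par b" "b = par a" using eq by (auto simp: doubleton_eq_iff)
      have "rk b < rk a" using par_rk[of a] a ab(2) by simp
      moreover have "rk a < rk b" using par_rk[of b] b ab(1) by simp
      ultimately show False by simp
    qed
  qed
  ultimately show ?thesis using rV fin by (simp add: card_image card_Diff_singleton)
qed

end

lemma rooted_neg: "rooted VT ET r par rk col \<Longrightarrow> rooted VT ET r par rk (\<lambda>y. \<not> col y)"
  unfolding rooted_def by auto



lemma subset_sum_aux:
  fixes g :: "'c \<Rightarrow> int"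
  assumes "finite P" "\<forall>c\<in>P. 0 < g c \<and> g c \<le> H" "2 * L - 2 \<le> H" "1 \<le> L"
  shows "sum g P < L \<or> (\<exists>J\<subseteq>P. L \<le> sum g J \<and> sum g J \<le> H)"
  using assms
proof (induction P rule: finite_induct)
  case empty then show ?case by simp
next
  case (insert a P)
  then have IH: "sum g P < L \<or> (\<exists>J\<subseteq>P. L \<le> sum g J \<and> sum g J \<le> H)" by auto
  have ga: "0 < g a" "g a \<le> H" using insert by auto
  show ?case
  proof (cases "\<exists>J\<subseteq>P. L \<le> sum g J \<and> sum g J \<le> H")
    case True then show ?thesis by blast
  next
    case False
    then have sP: "sum g P < L" using IH by blast
    have s: "sum g (insert a P) = g a + sum g P" using insert by simp
    show ?thesis
    proof (cases "L \<le> g a")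
      case True
      then have "{a} \<subseteq> insert a P \<and> L \<le> sum g {a} \<and> sum g {a} \<le> H" using ga by simp
      then show ?thesis by blast
    next
      case False
      show ?thesis
      proof (cases "sum g (insert a P) < L")
        case True then show ?thesis by blast
      next
        case False
        then have "L \<le> sum g (insert a P) \<and> sum g (insert a P) \<le> H"
          using s sP \<open>\<not> L \<le> g a\<close> insert.prems(2) by auto
        then show ?thesis by blast
      qed
    qed
  qed
qed

lemma subset_sum:
  fixes g :: "'c \<Rightarrow> int"
  assumes "finite C" "\<forall>c\<in>C. g c \<le> H" "2 * L - 2 \<le> H" "L \<le> sum g {c\<in>C. 0 < g c}" "1 \<le> L"
  shows "\<exists>J\<subseteq>C. L \<le> sum g J \<and> sum g J \<le> H"
proof -
  have "sum g {c\<in>C. 0 < g c} < L \<or> (\<exists>J\<subseteq>{c\<in>C. 0 < g c}. L \<le> sum g J \<and> sum g J \<le> H)"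
  proof (rule subset_sum_aux)
    show "finite {c\<in>C. 0 < g c}" using assms(1) by simp
    show "\<forall>c\<in>{c\<in>C. 0 < g c}. 0 < g c \<and> g c \<le> H" using assms(2) by blast
    show "2 * L - 2 \<le> H" by (rule assms(3))
    show "1 \<le> L" by (rule assms(5))
  qed
  then obtain J where "J \<subseteq> {c\<in>C. 0 < g c}" "L \<le> sum g J" "sum g J \<le> H" using assms(4) by auto
  then show ?thesis by blast
qed

lemma card_filter_sum:
  "finite A \<Longrightarrow> int (card {x\<in>A. P x}) = (\<Sum>x\<in>A. if P x then 1 else 0)"
  by (simp add: sum.If_cases Int_def)

lemma sum_pos_part:
  fixes g :: "'c \<Rightarrow> int"
  assumes "finite C"
  shows "sum g C \<le> sum g {c\<in>C. 0 < g c}"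
proof -
  have "sum g C \<le> (\<Sum>c\<in>C. if 0 < g c then g c else 0)"
    by (rule sum_mono) auto
  also have "\<dots> = sum g {c\<in>C. 0 < g c}" by (rule sum.inter_filter[OF assms, symmetric])
  finally show ?thesis .
qed

context rtree
begin

lemma arith_facts:
  fixes d K nA nB dl :: int
  assumes d2: "d \<ge> 2" and K: "K = nA + nB - 1" and kd: "K > 6 * d"
    and dl: "6 * d * dl \<ge> (4 * d - 1) * K" and P1: "nB - 1 \<le> d * nA" and nA: "nA \<ge> 0"
  shows "2 * dl \<ge> K + 1" "2 * nB + nA - 2 \<le> 3 * dl"
proof -
  have a0: "(2 * d - 2) * K > 0" using d2 kd by (intro mult_pos_pos) auto
  have a1: "(8 * d - 2) * K - 6 * d * K = (2 * d - 2) * K" by (simp add: algebra_simps)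
  have b: "6 * d * (2 * dl) \<ge> (8*d - 2) * K" using dl by (simp add: algebra_simps)
  have "6 * d * (2 * dl) > 6 * d * K" using a0 a1 b by linarith
  then have "2 * dl > K" using d2 by (simp add: mult_less_cancel_left)
  then show "2 * dl \<ge> K + 1" by simp
  have b2: "d * nA \<ge> 1 * nA" using d2 nA by (intro mult_right_mono) auto
  have "6 * d * (2 * nB + nA - 2) \<le> 3 * (4 * d - 1) * K"
  proof -
    have "3 * (4 * d - 1) * K - 6 * d * (2 * nB + nA - 2) = 6 * (d * nA) - 3 * nA - 3 * nB + 3"
      by (simp add: K algebra_simps)
    also have "\<dots> \<ge> 0" using P1 b2 by linarith
    finally show ?thesis by simp
  qed
  also have "\<dots> \<le> 6 * d * (3 * dl)" using dl by (simp add: algebra_simps)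
  finally show "2 * nB + nA - 2 \<le> 3 * dl" using d2 by (simp add: mult_le_cancel_left)
qed

lemma nB_bound:
  assumes md: "max_degree_le VT ET \<Delta>"
  shows "card {y\<in>VT. col y} \<le> \<Delta> * card {y\<in>VT. \<not> col y} + 1"
proof -
  let ?A = "{y\<in>VT. \<not> col y}"
  have "{y\<in>VT. col y} - {r} \<subseteq> (\<Union>a\<in>?A. children a)"
  proof
    fix y assume y: "y \<in> {y\<in>VT. col y} - {r}"
    then have "par y \<in> ?A" "y \<in> children (par y)"
      using parV par_col unfolding children_def by auto
    then show "y \<in> (\<Union>a\<in>?A. children a)" by blast
  qed
  then have "card ({y\<in>VT. col y} - {r}) \<le> card (\<Union>a\<in>?A. children a)"
    using fin_children fin by (intro card_mono) auto
  also have "\<dots> \<le> (\<Sum>a\<in>?A. card (children a))" using fin by (intro card_UN_le) auto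
  also have "\<dots> \<le> (\<Sum>a\<in>?A. \<Delta>)"
  proof (rule sum_mono)
    fix a assume a: "a \<in> ?A"
    have "card (children a) \<le> card (nbrs VT ET a)"
      using children_nbrs fin by (intro card_mono) (auto simp: nbrs_def)
    also have "\<dots> \<le> \<Delta>" using md a by (auto simp: max_degree_le_def degree_def)
    finally show "card (children a) \<le> \<Delta>" .
  qed
  also have "\<dots> = \<Delta> * card ?A" by simp
  finally show ?thesis by (simp add: card_Diff_singleton_if split: if_splits)
qed

lemma card_split: "card {y\<in>VT. col y} + card {y\<in>VT. \<not> col y} = card VT"
proof -
  have "{y\<in>VT. col y} \<union> {y\<in>VT. \<not> col y} = VT" by auto
  moreover have "{y\<in>VT. col y} \<inter> {y\<in>VT. \<not> col y} = {}" by auto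
  ultimately show ?thesis using fin card_Un_disjoint[of "{y\<in>VT. col y}" "{y\<in>VT. \<not> col y}"] by simp
qed

lemma D_root: "D r = int (card {y\<in>VT. col y}) - int (card {y\<in>VT. \<not> col y})"
proof -
  have "D r = (\<Sum>y\<in>VT. if col y then 1 else -1)" unfolding D_def sgn_def desc_root by simp
  also have "\<dots> = int (card {y\<in>VT. col y}) - int (card {y\<in>VT. \<not> col y})"
    using fin by (simp add: sum.If_cases Int_def)
  finally show ?thesis .
qed

lemma flip_local:
  assumes J: "J \<subseteq> children u" and a: "a \<in> VT" "a \<noteq> r" "par a \<noteq> u"
  shows "a \<in> (\<Union>j\<in>J. desc j) \<longleftrightarrow> par a \<in> (\<Union>j\<in>J. desc j)"
proof
  assume "a \<in> (\<Union>j\<in>J. desc j)"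
  then obtain j where j: "j \<in> J" "dsc j a" unfolding desc_def by auto
  from dsc_cases[OF j(2)] have "dsc j (par a)"
  proof
    assume "a = j" then show ?thesis using J j a(3) children_VT by auto
  qed auto
  then show "par a \<in> (\<Union>j\<in>J. desc j)" using j unfolding desc_def by auto
next
  assume "par a \<in> (\<Union>j\<in>J. desc j)"
  then obtain j where j: "j \<in> J" "dsc j (par a)" unfolding desc_def by auto
  then have "dsc j a" using dsc.step a by blast
  then show "a \<in> (\<Union>j\<in>J. desc j)" using j unfolding desc_def by auto
qed

end



context rtree
begin

lemma split:
  fixes \<Delta> k :: nat and \<delta> :: int
  assumes md: "max_degree_le VT ET \<Delta>" and D2: "\<Delta> \<ge> 2" and cV: "card VT = k + 1" and kD: "k > 6 * \<Delta>"
    and dl: "6 * int \<Delta> * \<delta> \<ge> (4 * int \<Delta> - 1) * int k"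
    and bal: "card {y\<in>VT. \<not> col y} \<le> card {y\<in>VT. col y}"
  shows "\<exists>v\<in>VT. \<exists>c. (\<forall>a\<in>VT-{v}. \<forall>b\<in>VT-{v}. ET a b \<longrightarrow> c a \<noteq> c b) \<and>
           int (card {y\<in>VT-{v}. c y}) \<le> \<delta> \<and> int (card {y\<in>VT-{v}. \<not> c y}) \<le> \<delta>"
proof -
  define nB where "nB = int (card {y\<in>VT. col y})"
  define nA where "nA = int (card {y\<in>VT. \<not> col y})"
  have sumAB: "nA + nB = int k + 1" using card_split cV unfolding nA_def nB_def by simp
  have "card {y\<in>VT. col y} \<le> \<Delta> * card {y\<in>VT. \<not> col y} + 1" by (rule nB_bound[OF md])
  then have "int (card {y\<in>VT. col y}) \<le> int (\<Delta> * card {y\<in>VT. \<not> col y} + 1)" by (simp only: of_nat_le_iff)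
  then have P1: "nB - 1 \<le> int \<Delta> * nA" unfolding nA_def nB_def by simp
  have AF: "2 * \<delta> \<ge> int k + 1" "2 * nB + nA - 2 \<le> 3 * \<delta>"
    using arith_facts[of "int \<Delta>" "int k" nA nB \<delta>] D2 kD dl P1 sumAB unfolding nA_def by auto
  have balI: "nA \<le> nB" using bal unfolding nA_def nB_def by simp
  show ?thesis
  proof (cases "nB \<le> \<delta>")
    case True
    have "card {y\<in>VT-{r}. col y} \<le> card {y\<in>VT. col y}" using fin by (intro card_mono) auto
    moreover have "card {y\<in>VT-{r}. \<not> col y} \<le> card {y\<in>VT. \<not> col y}" using fin by (intro card_mono) auto
    ultimately show ?thesis using True balI col_edge rV unfolding nA_def nB_def by (intro bexI[of _ r] exI[of _ col]) auto
  next
    case False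
    define L where "L = nB - \<delta>"
    define H where "H = nB + \<delta> - (int k + 1)"
    have Dr: "D r \<ge> H + 1" using D_root False sumAB unfolding H_def nA_def nB_def by simp
    obtain u where u: "u \<in> VT \<and> D u \<ge> H + 1"
      and umin: "\<forall>w. w \<in> VT \<and> D w \<ge> H + 1 \<longrightarrow> card (desc u) \<le> card (desc w)"
      using ex_has_least_nat[of "\<lambda>w. w \<in> VT \<and> D w \<ge> H + 1" r "\<lambda>w. card (desc w)"] Dr rV by blast
    have chH: "\<forall>c\<in>children u. D c \<le> H"
    proof
      fix c assume c: "c \<in> children u"
      show "D c \<le> H"
      proof (rule ccontr)
        assume "\<not> D c \<le> H"
        then have "card (desc u) \<le> card (desc c)" using umin c children_VT by auto
        then show False using child_card[OF c] by simp
      qed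
    qed
    have "sgn u \<le> 1" by (simp add: sgn_def)
    then have "(\<Sum>c\<in>children u. D c) \<ge> H" using D_rec u by auto
    then have pos: "L \<le> sum D {c\<in>children u. 0 < D c}"
      using sum_pos_part[OF fin_children, of D u] AF unfolding L_def H_def by linarith
    have LH: "2 * L - 2 \<le> H" using AF sumAB unfolding L_def H_def by (simp add: algebra_simps)
    obtain J where J: "J \<subseteq> children u" "L \<le> sum D J" "sum D J \<le> H"
      using subset_sum[OF fin_children chH LH pos] False unfolding L_def by auto
    have finJ: "finite J" using J(1) fin_children finite_subset by blast
    define U where "U = (\<Union>j\<in>J. desc j)"
    define c where "c = (\<lambda>y. col y \<noteq> (y \<in> U))"
    define S where "S = VT - {u}"
    have US: "U \<subseteq> S" unfolding U_def S_def using J(1) desc_sub not_in_child_desc by blast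
    have finS: "finite S" unfolding S_def using fin by simp
    have cS: "card S = k" unfolding S_def using cV u by (simp add: card_Diff_singleton)
    have proper: "\<forall>a\<in>VT-{u}. \<forall>b\<in>VT-{u}. ET a b \<longrightarrow> c a \<noteq> c b"
    proof (intro ballI impI)
      fix a b assume a: "a \<in> VT - {u}" and b: "b \<in> VT - {u}" and ab: "ET a b"
      have cab: "col a \<noteq> col b" using col_edge[OF ab] .
      from edge_char[OF ab] have "(a \<in> U) = (b \<in> U)"
      proof
        assume "a \<noteq> r \<and> par a = b"
        then show ?thesis using flip_local[OF J(1), of a] a b unfolding U_def by auto
      next
        assume "b \<noteq> r \<and> par b = a"
        then show ?thesis using flip_local[OF J(1), of b] a b unfolding U_def by auto
      qed
      then show "c a \<noteq> c b" using cab unfolding c_def by auto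
    qed
    have sU: "(\<Sum>y\<in>U. sgn y) = sum D J"
      unfolding U_def D_def
    proof (rule sum.UNION_disjoint[OF finJ])
      show "\<forall>i\<in>J. finite (desc i)" using fin_desc by blast
      show "\<forall>i\<in>J. \<forall>j\<in>J. i \<noteq> j \<longrightarrow> desc i \<inter> desc j = {}"
        using children_disj J(1) by blast
    qed
    have "int (card {y\<in>S. c y}) = (\<Sum>y\<in>S. if c y then 1 else 0)" by (rule card_filter_sum[OF finS])
    also have "\<dots> = (\<Sum>y\<in>S. (if col y then 1 else 0) - (if y \<in> U then sgn y else 0))"
      by (rule sum.cong) (auto simp: c_def sgn_def)
    also have "\<dots> = (\<Sum>y\<in>S. if col y then 1 else 0) - (\<Sum>y\<in>S. if y \<in> U then sgn y else 0)"
      by (simp add: sum_subtractf)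
    also have "(\<Sum>y\<in>S. if y \<in> U then sgn y else 0) = (\<Sum>y\<in>U. sgn y)"
    proof -
      have "(\<Sum>y\<in>S. if y \<in> U then sgn y else 0) = sum sgn {y\<in>S. y \<in> U}"
        using sum.inter_filter[OF finS, of sgn "\<lambda>y. y \<in> U"] by simp
      also have "{y\<in>S. y \<in> U} = U" using US by auto
      finally show ?thesis .
    qed
    also have "(\<Sum>y\<in>S. if col y then 1 else 0) = int (card {y\<in>S. col y})"
      by (rule card_filter_sum[OF finS, symmetric])
    finally have ct: "int (card {y\<in>S. c y}) = int (card {y\<in>S. col y}) - sum D J" using sU by simp
    have "{y\<in>S. col y} = {y\<in>VT. col y} - {u}" unfolding S_def by auto
    then have cc: "int (card {y\<in>S. col y}) = nB - (if col u then 1 else 0)"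
    proof (cases "col u")
      case True
      then have "u \<in> {y\<in>VT. col y}" using u by simp
      then have "card {y\<in>VT. col y} = Suc (card ({y\<in>VT. col y} - {u}))"
        using fin by (intro card_Suc_Diff1[symmetric]) auto
      then show ?thesis using True \<open>{y\<in>S. col y} = {y\<in>VT. col y} - {u}\<close> unfolding nB_def by simp
    next
      case False
      then have "{y\<in>VT. col y} - {u} = {y\<in>VT. col y}" by auto
      then show ?thesis using False \<open>{y\<in>S. col y} = {y\<in>VT. col y} - {u}\<close> unfolding nB_def by simp
    qed
    have "int (card {y\<in>S. \<not> c y}) = (\<Sum>y\<in>S. if \<not> c y then 1 else 0)" by (rule card_filter_sum[OF finS])
    also have "\<dots> = (\<Sum>y\<in>S. 1 - (if c y then 1 else 0))" by (rule sum.cong) auto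
    also have "\<dots> = int (card S) - int (card {y\<in>S. c y})"
      using card_filter_sum[OF finS, of c] by (simp add: sum_subtractf)
    finally have cf: "int (card {y\<in>S. \<not> c y}) = int k - int (card {y\<in>S. c y})" using cS by simp
    have "int (card {y\<in>S. c y}) \<le> \<delta>" "int (card {y\<in>S. \<not> c y}) \<le> \<delta>"
      using ct cc cf J(2,3) unfolding L_def H_def by (auto split: if_splits)
    then show ?thesis using proper u unfolding S_def by blast
  qed
qed

end



context rtree
begin

definition good :: "('a \<Rightarrow> 'a \<Rightarrow> bool) \<Rightarrow> 'a \<Rightarrow> 'a set \<Rightarrow> 'a set \<Rightarrow> ('b \<Rightarrow> bool) \<Rightarrow> 'b set \<Rightarrow> ('b \<Rightarrow> 'a) \<Rightarrow> bool" where
  "good E x Y1 Y2 c W f \<longleftrightarrow> W \<subseteq> VT \<and> r \<in> W \<and> children r \<subseteq> W \<and> (\<forall>y\<in>W-{r}. par y \<in> W) \<and>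
     inj_on f W \<and> f r = x \<and> (\<forall>y\<in>W-{r}. f y \<in> (if c y then Y1 else Y2)) \<and>
     (\<forall>a\<in>W. \<forall>b\<in>W. ET a b \<longrightarrow> E (f a) (f b))"

lemma embed:
  fixes V :: "'a set" and E x Y1 Y2 \<Delta> and c :: "'b \<Rightarrow> bool"
  assumes sgG: "sgraph V E" and x: "x \<in> V" and bp: "bipartite_parts (V - {x}) E Y1 Y2"
    and n1: "\<Delta> \<le> card (nbrs Y1 E x)" and n2: "\<Delta> \<le> card (nbrs Y2 E x)"
    and dr: "degree VT ET r \<le> \<Delta>"
    and cp: "\<forall>a\<in>VT-{r}. \<forall>b\<in>VT-{r}. ET a b \<longrightarrow> c a \<noteq> c b"
    and cnt: "\<forall>w\<in>V-{x}. \<forall>b. card {y\<in>VT-{r}. c y = b} \<le> degree (V - {x}) E w"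
  shows "contains_copy V E VT ET"
proof -
  have finV: "finite V" using sgG by (simp add: sgraph_def)
  have Esym: "\<And>a b. E a b \<Longrightarrow> E b a" and EV: "\<And>a b. E a b \<Longrightarrow> a \<in> V \<and> b \<in> V"
    using sgG by (auto simp: sgraph_def)
  have Yun: "Y1 \<union> Y2 = V - {x}" and Ydis: "Y1 \<inter> Y2 = {}"
    and Y1i: "\<forall>u\<in>Y1. \<forall>v\<in>Y1. \<not> E u v" and Y2i: "\<forall>u\<in>Y2. \<forall>v\<in>Y2. \<not> E u v"
    using bp by (auto simp: bipartite_parts_def)
  define side where "side = (\<lambda>b. if b then Y1 else Y2)"
  have side_sub: "\<And>b. side b \<subseteq> V - {x}" using Yun unfolding side_def by auto
  have side_dis: "\<And>b. side b \<inter> side (\<not> b) = {}" using Ydis unfolding side_def by auto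
  have finY: "finite Y1" "finite Y2" using Yun finV by (metis finite_Diff finite_Un)+
  define C1 where "C1 = {y\<in>children r. c y}"
  define C2 where "C2 = {y\<in>children r. \<not> c y}"
  have cr: "card (children r) \<le> \<Delta>"
  proof -
    have "card (children r) \<le> card (nbrs VT ET r)"
      using children_nbrs fin by (intro card_mono) (auto simp: nbrs_def)
    then show ?thesis using dr by (simp add: degree_def)
  qed
  have "card C1 \<le> card (nbrs Y1 E x)"
    using cr n1 card_mono[OF fin_children[of r], of C1] unfolding C1_def by auto
  then obtain g1 where g1: "g1 ` C1 \<subseteq> nbrs Y1 E x" "inj_on g1 C1"
    using card_le_inj[of C1 "nbrs Y1 E x"] fin_children finY unfolding C1_def nbrs_def by auto
  have "card C2 \<le> card (nbrs Y2 E x)"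
    using cr n2 card_mono[OF fin_children[of r], of C2] unfolding C2_def by auto
  then obtain g2 where g2: "g2 ` C2 \<subseteq> nbrs Y2 E x" "inj_on g2 C2"
    using card_le_inj[of C2 "nbrs Y2 E x"] fin_children finY unfolding C2_def nbrs_def by auto
  define f0 where "f0 = (\<lambda>y. if y = r then x else if c y then g1 y else g2 y)"
  define W0 where "W0 = insert r (children r)"
  have f0side: "\<forall>y\<in>children r. f0 y \<in> side (c y) \<and> E x (f0 y)"
  proof
    fix y assume y: "y \<in> children r"
    then have yr: "y \<noteq> r" using children_VT by blast
    show "f0 y \<in> side (c y) \<and> E x (f0 y)"
    proof (cases "c y")
      case True
      then have "y \<in> C1" using y unfolding C1_def by simp
      then show ?thesis using g1 True yr unfolding f0_def side_def nbrs_def by auto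
    next
      case False
      then have "y \<in> C2" using y unfolding C2_def by simp
      then show ?thesis using g2 False yr unfolding f0_def side_def nbrs_def by auto
    qed
  qed
  have xnot: "x \<notin> side b" for b using side_sub by blast
  have f0r: "f0 r = x" unfolding f0_def by simp
  have good0: "good E x Y1 Y2 c W0 f0"
    unfolding good_def
  proof (intro conjI)
    show "W0 \<subseteq> VT" unfolding W0_def using rV children_VT by blast
    show "r \<in> W0" "children r \<subseteq> W0" unfolding W0_def by auto
    show "\<forall>y\<in>W0 - {r}. par y \<in> W0" unfolding W0_def using children_VT by auto
    show "f0 r = x" unfolding f0_def by simp
    show "\<forall>y\<in>W0 - {r}. f0 y \<in> (if c y then Y1 else Y2)" using f0side unfolding W0_def side_def by auto
    show "inj_on f0 W0"
    proof (rule inj_onI)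
      fix a b assume a: "a \<in> W0" and b: "b \<in> W0" and eq: "f0 a = f0 b"
      show "a = b"
      proof (cases "a = r \<or> b = r")
        case True
        have f0r: "f0 r = x" unfolding f0_def by simp
        have "a \<in> children r \<Longrightarrow> f0 a \<noteq> x" "b \<in> children r \<Longrightarrow> f0 b \<noteq> x"
          using f0side xnot by metis+
        then show ?thesis using a b eq True f0r unfolding W0_def by auto
      next
        case False
        then have ab: "a \<in> children r" "b \<in> children r" "a \<noteq> r" "b \<noteq> r" using a b unfolding W0_def by auto
        have "c a = c b"
        proof (rule ccontr)
          assume "c a \<noteq> c b"
          then have "side (c b) = side (\<not> c a)" by simp
          moreover have "f0 a \<in> side (c a)" "f0 b \<in> side (c b)" using f0side ab by blast+
          ultimately show False using eq side_dis[of "c a"] by auto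
        qed
        show ?thesis
        proof (cases "c a")
          case True
          then have "a \<in> C1" "b \<in> C1" using ab \<open>c a = c b\<close> unfolding C1_def by auto
          then show ?thesis using g1(2) eq ab True \<open>c a = c b\<close> unfolding f0_def inj_on_def by auto
        next
          case False
          then have "a \<in> C2" "b \<in> C2" using ab \<open>c a = c b\<close> unfolding C2_def by auto
          then show ?thesis using g2(2) eq ab False \<open>c a = c b\<close> unfolding f0_def inj_on_def by auto
        qed
      qed
    qed
    show "\<forall>a\<in>W0. \<forall>b\<in>W0. ET a b \<longrightarrow> E (f0 a) (f0 b)"
    proof (intro ballI impI)
      fix a b assume a: "a \<in> W0" and b: "b \<in> W0" and ab: "ET a b"
      show "E (f0 a) (f0 b)"
      proof (cases "a = r")
        case True
        then have "b \<noteq> r" using irr[OF ab] by simp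
        then have "b \<in> children r" using b unfolding W0_def by simp
        then show ?thesis using f0side True using f0r by simp
      next
        case False
        then have ac: "a \<in> children r" using a unfolding W0_def by simp
        show ?thesis
        proof (cases "b = r")
          case True
          then show ?thesis using f0side ac Esym using f0r by simp
        next
          case False
          then have bc: "b \<in> children r" using b unfolding W0_def by simp
          from edge_char[OF ab] show ?thesis
            using ac bc children_VT by auto
        qed
      qed
    qed
  qed
  have ext: "\<exists>y f'. y \<in> VT - W \<and> good E x Y1 Y2 c (insert y W) f'"
    if gW: "good E x Y1 Y2 c W f" and WV: "W \<noteq> VT" for W f
  proof -
    have G: "W \<subseteq> VT" "r \<in> W" "children r \<subseteq> W" "\<forall>y\<in>W-{r}. par y \<in> W" "inj_on f W" "f r = x"
      "\<forall>y\<in>W-{r}. f y \<in> side (c y)" "\<forall>a\<in>W. \<forall>b\<in>W. ET a b \<longrightarrow> E (f a) (f b)"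
      using gW unfolding good_def side_def by auto
    obtain y0 where "y0 \<in> VT - W" using G(1) WV by blast
    then obtain y where y: "y \<in> VT - W" and ymin: "\<forall>z. z \<in> VT - W \<longrightarrow> rk y \<le> rk z"
      using ex_has_least_nat[of "\<lambda>z. z \<in> VT - W" y0 rk] by blast
    have yr: "y \<noteq> r" using y G(2) by blast
    define p where "p = par y"
    have pV: "p \<in> VT" using parV y yr p_def by blast
    have pW: "p \<in> W"
    proof (rule ccontr)
      assume "p \<notin> W"
      then have "rk y \<le> rk p" using ymin pV by blast
      then show False using par_rk[of y] y yr p_def by simp
    qed
    have pr: "p \<noteq> r"
    proof
      assume "p = r"
      then have "y \<in> children r" using y yr p_def unfolding children_def by simp
      then show False using G(3) y by blast
    qed
    have cyp: "c y \<noteq> c p" using cp y yr pV pr par_E[of y] p_def by (metis Diff_iff singletonD)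
    have fp: "f p \<in> side (c p)" using G(7) pW pr by blast
    have fpV: "f p \<in> V - {x}" using fp side_sub by blast
    define N where "N = nbrs (V - {x}) E (f p)"
    define K where "K = {z\<in>VT-{r}. c z = c y}"
    define Forb where "Forb = f ` {z\<in>W-{r}. c z = c y}"
    have finK: "finite K" unfolding K_def using fin by simp
    have "card K \<le> card N" using cnt fpV unfolding K_def N_def degree_def by blast
    have "{z\<in>W-{r}. c z = c y} \<subseteq> K - {y}" unfolding K_def using G(1) y by auto
    then have "card {z\<in>W-{r}. c z = c y} \<le> card (K - {y})" using finK by (intro card_mono) auto
    moreover have "y \<in> K" unfolding K_def using y yr by simp
    ultimately have "card {z\<in>W-{r}. c z = c y} < card K" using finK
      by (metis card_Diff1_less le_less_trans)
    moreover have finWc: "finite {z\<in>W-{r}. c z = c y}" using finite_subset[OF G(1) fin] by simp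
    ultimately have "card Forb < card N" unfolding Forb_def
      using \<open>card K \<le> card N\<close> card_image_le[OF finWc, of f] by linarith
    moreover have "finite Forb" unfolding Forb_def using finWc by simp
    ultimately have "\<not> N \<subseteq> Forb" using card_mono[of Forb N] by auto
    then obtain w where wN: "w \<in> N" and wF: "w \<notin> Forb" by blast
    have w1: "w \<in> V - {x}" "E (f p) w" using wN unfolding N_def nbrs_def by auto
    have wside: "w \<in> side (c y)"
    proof -
      have "w \<in> Y1 \<union> Y2" using w1 Yun by simp
      moreover have "w \<notin> side (c p)"
        using fp w1(2) Y1i Y2i unfolding side_def by (auto split: if_splits)
      ultimately show ?thesis using cyp unfolding side_def by (auto split: if_splits)
    qed
    define f' where "f' = f(y := w)"
    have wnot: "w \<notin> f ` W"
    proof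
      assume "w \<in> f ` W"
      then obtain z where z: "z \<in> W" "f z = w" by blast
      show False
      proof (cases "z = r")
        case True then show ?thesis using z G(6) wside side_sub by auto
      next
        case False
        show ?thesis
        proof (cases "c z = c y")
          case True
          then have "w \<in> Forb" unfolding Forb_def using z False by auto
          then show ?thesis using wF by simp
        next
          case False
          then have "c z = (\<not> c y)" by simp
          moreover have "f z \<in> side (c z)" using G(7) z \<open>z \<noteq> r\<close> by blast
          ultimately have "f z \<in> side (\<not> c y)" by simp
          then show ?thesis using z wside side_dis[of "c y"] by auto
        qed
      qed
    qed
    have yW: "y \<notin> W" using y by blast
    have "good E x Y1 Y2 c (insert y W) f'"
      unfolding good_def
    proof (intro conjI)
      show "insert y W \<subseteq> VT" using G(1) y by blast
      show "r \<in> insert y W" "children r \<subseteq> insert y W" using G by auto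
      show "\<forall>z\<in>insert y W - {r}. par z \<in> insert y W" using G(4) pW p_def by auto
      show "inj_on f' (insert y W)"
      proof -
        have "inj_on f' W" using G(5) yW unfolding f'_def inj_on_def by auto
        moreover have "f' y \<notin> f' ` (W - {y})" using wnot yW unfolding f'_def by auto
        ultimately show ?thesis by simp
      qed
      show "f' r = x" using G(6) yr unfolding f'_def by simp
      show "\<forall>z\<in>insert y W - {r}. f' z \<in> (if c z then Y1 else Y2)"
      proof
        fix z assume z: "z \<in> insert y W - {r}"
        show "f' z \<in> (if c z then Y1 else Y2)"
        proof (cases "z = y")
          case True then show ?thesis using wside unfolding f'_def side_def by simp
        next
          case False
          then have "f z \<in> side (c z)" using G(7) z by blast
          then show ?thesis using False unfolding f'_def side_def by simp
        qed
      qed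
      show "\<forall>a\<in>insert y W. \<forall>b\<in>insert y W. ET a b \<longrightarrow> E (f' a) (f' b)"
      proof (intro ballI impI)
        fix a b assume a: "a \<in> insert y W" and b: "b \<in> insert y W" and ab: "ET a b"
        have edge_y: "E (f' y) (f' z)" if z: "z \<in> W" and yz: "ET y z" for z
        proof -
          from edge_char[OF yz] have "z = p"
          proof
            assume "z \<noteq> r \<and> par z = y"
            then have "y \<in> W" using G(4) z by blast
            then show ?thesis using yW by simp
          qed (simp add: p_def)
          then show ?thesis using w1(2) Esym yW pW unfolding f'_def by auto
        qed
        show "E (f' a) (f' b)"
        proof (cases "a = y")
          case True
          then have "b \<noteq> y" using irr[OF ab] by simp
          then have "b \<in> W" using b by simp
          then show ?thesis using edge_y ab True by simp
        next
          case False
          then have aW: "a \<in> W" using a by simp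
          show ?thesis
          proof (cases "b = y")
            case True
            then have "E (f' b) (f' a)" using edge_y aW sym[OF ab] by simp
            then show ?thesis using Esym by simp
          next
            case False
            then have "b \<in> W" using b by simp
            then show ?thesis using G(8) aW ab \<open>a \<noteq> y\<close> False unfolding f'_def by simp
          qed
        qed
      qed
    qed
    then show ?thesis using y by blast
  qed
  have full: "\<forall>W f. good E x Y1 Y2 c W f \<and> card (VT - W) = n \<longrightarrow> (\<exists>g. good E x Y1 Y2 c VT g)" for n
  proof (induction n)
    case 0
    show ?case
    proof (intro allI impI)
      fix W f assume "good E x Y1 Y2 c W f \<and> card (VT - W) = 0"
      then have "good E x Y1 Y2 c W f" "W = VT" using fin unfolding good_def by auto
      then show "\<exists>g. good E x Y1 Y2 c VT g" by blast
    qed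
  next
    case (Suc n)
    show ?case
    proof (intro allI impI)
      fix W f assume H: "good E x Y1 Y2 c W f \<and> card (VT - W) = Suc n"
      then have "W \<noteq> VT" by auto
      then obtain y f' where y: "y \<in> VT - W" "good E x Y1 Y2 c (insert y W) f'" using ext H by blast
      have "card (VT - insert y W) = n" using H y fin
        by (metis Diff_insert card_Diff_singleton diff_Suc_1 finite_Diff)
      then show "\<exists>g. good E x Y1 Y2 c VT g" using Suc y by blast
    qed
  qed
  obtain g where g: "good E x Y1 Y2 c VT g" using full good0 by blast
  show ?thesis unfolding contains_copy_def
  proof (intro exI[of _ g] conjI)
    show "inj_on g VT" using g unfolding good_def by simp
    show "\<forall>u\<in>VT. \<forall>v\<in>VT. ET u v \<longrightarrow> E (g u) (g v)" using g unfolding good_def by simp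
    show "g ` VT \<subseteq> V"
    proof
      fix z assume "z \<in> g ` VT"
      then obtain y where y: "y \<in> VT" "z = g y" by blast
      show "z \<in> V"
      proof (cases "y = r")
        case True then show ?thesis using g x y unfolding good_def by simp
      next
        case False
        then have "g y \<in> side (c y)" using g y unfolding good_def side_def by simp
        then show ?thesis using side_sub y by blast
      qed
    qed
  qed
qed

end



theorem lemma7p4:
  fixes V :: "'a set" and E :: "'a \<Rightarrow> 'a \<Rightarrow> bool" and x :: 'a
    and Y1 Y2 :: "'a set" and \<Delta> k :: nat
  assumes "k > 6 * \<Delta>"
    and "sgraph V E"
    and "x \<in> V"
    and "\<forall>v \<in> V - {x}. real (degree (V - {x}) E v) \<ge> (2/3 - 1 / (6 * real \<Delta>)) * real k"
    and "bipartite_parts (V - {x}) E Y1 Y2"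
    and "card (nbrs Y1 E x) \<ge> \<Delta>"
    and "card (nbrs Y2 E x) \<ge> \<Delta>"
  shows "\<forall>(VT :: 'b set) ET. is_tree VT ET \<and> card (edges VT ET) = k \<and> max_degree_le VT ET \<Delta>
           \<longrightarrow> contains_copy V E VT ET"
proof (intro allI impI)
  fix VT :: "'b set" and ET
  assume H: "is_tree VT ET \<and> card (edges VT ET) = k \<and> max_degree_le VT ET \<Delta>"
  then have T: "is_tree VT ET" and ce: "card (edges VT ET) = k" and md: "max_degree_le VT ET \<Delta>" by auto
  have sgT: "sgraph VT ET" using T by (simp add: is_tree_def)
  obtain r0 where r0: "r0 \<in> VT" using T unfolding is_tree_def by blast
  obtain par rk col where R: "rooted VT ET r0 par rk col" using tree_rooted[OF T r0] by blast
  interpret R1: rtree VT ET r0 par rk col using sgT R by unfold_locales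
  have cV: "card VT = k + 1"
  proof -
    have "card VT - 1 = k" using R1.card_edges ce by simp
    moreover have "VT \<noteq> {}" using r0 by blast
    then have "card VT \<ge> 1" using R1.fin by (simp add: Suc_le_eq card_gt_0_iff)
    ultimately show ?thesis by simp
  qed
  have D2: "\<Delta> \<ge> 2"
  proof (rule ccontr)
    assume "\<not> \<Delta> \<ge> 2"
    then have D1: "\<Delta> \<le> 1" by simp
    have allc: "VT - {r0} \<subseteq> R1.children r0"
    proof
      fix y assume y: "y \<in> VT - {r0}"
      have "par y = r0"
      proof (rule ccontr)
        assume pr: "par y \<noteq> r0"
        define p where "p = par y"
        have pV: "p \<in> VT" using R1.parV y p_def by blast
        have "par p \<noteq> y"
        proof
          assume "par p = y"
          then have "rk y < rk p" using R1.par_rk[of p] pV pr p_def by simp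
          moreover have "rk p < rk y" using R1.par_rk[of y] y p_def by simp
          ultimately show False by simp
        qed
        have "{par p, y} \<subseteq> nbrs VT ET p"
          using R1.par_E[of p] R1.par_E[of y] R1.sym pV pr y p_def R1.parV[of p]
          unfolding nbrs_def by auto
        then have "card {par p, y} \<le> card (nbrs VT ET p)" using R1.fin by (intro card_mono) (auto simp: nbrs_def)
        moreover have "card {par p, y} = 2" using \<open>par p \<noteq> y\<close> by simp
        moreover have "card (nbrs VT ET p) \<le> \<Delta>" using md pV by (simp add: max_degree_le_def degree_def)
        ultimately show False using D1 by simp
      qed
      then show "y \<in> R1.children r0" using y unfolding R1.children_def by simp
    qed
    have "card (VT - {r0}) \<le> card (R1.children r0)" using allc R1.fin_children by (rule card_mono[rotated])
    also have "\<dots> \<le> card (nbrs VT ET r0)" using R1.children_nbrs R1.fin by (intro card_mono) (auto simp: nbrs_def)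
    also have "\<dots> \<le> \<Delta>" using md r0 by (simp add: max_degree_le_def degree_def)
    finally have "k \<le> \<Delta>" using cV r0 by (simp add: card_Diff_singleton)
    then show False using assms(1) by simp
  qed
  define Dr where "Dr = (2/3 - 1 / (6 * real \<Delta>)) * real k"
  define \<delta> where "\<delta> = \<lceil>Dr\<rceil>"
  have dl: "6 * int \<Delta> * \<delta> \<ge> (4 * int \<Delta> - 1) * int k"
  proof -
    have "6 * real \<Delta> * Dr = (4 * real \<Delta> - 1) * real k" unfolding Dr_def using D2 by (simp add: field_simps)
    moreover have "Dr \<le> real_of_int \<delta>" unfolding \<delta>_def by simp
    then have "6 * real \<Delta> * Dr \<le> 6 * real \<Delta> * real_of_int \<delta>" by (intro mult_left_mono) auto
    ultimately have "real_of_int ((4 * int \<Delta> - 1) * int k) \<le> real_of_int (6 * int \<Delta> * \<delta>)" by simp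
    then show ?thesis by (simp only: of_int_le_iff)
  qed
  have degd: "\<forall>w\<in>V-{x}. \<delta> \<le> int (degree (V - {x}) E w)"
  proof
    fix w assume "w \<in> V - {x}"
    then have "Dr \<le> real (degree (V - {x}) E w)" using assms(4) Dr_def by simp
    then show "\<delta> \<le> int (degree (V - {x}) E w)" unfolding \<delta>_def by (simp add: ceiling_le_iff)
  qed
  obtain v c where v: "v \<in> VT" and cp: "\<forall>a\<in>VT-{v}. \<forall>b\<in>VT-{v}. ET a b \<longrightarrow> c a \<noteq> c b"
    and c1: "int (card {y\<in>VT-{v}. c y}) \<le> \<delta>" and c2: "int (card {y\<in>VT-{v}. \<not> c y}) \<le> \<delta>"
  proof (cases "card {y\<in>VT. \<not> col y} \<le> card {y\<in>VT. col y}")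
    case True
    show ?thesis using R1.split[OF md D2 cV assms(1) dl True] that by blast
  next
    case False
    interpret R2: rtree VT ET r0 par rk "\<lambda>y. \<not> col y" using sgT rooted_neg[OF R] by unfold_locales
    have "card {y\<in>VT. \<not> \<not> col y} \<le> card {y\<in>VT. \<not> col y}" using False by simp
    then show ?thesis using R2.split[OF md D2 cV assms(1) dl] that by blast
  qed
  obtain par' rk' col' where R': "rooted VT ET v par' rk' col'" using tree_rooted[OF T v] by blast
  interpret R3: rtree VT ET v par' rk' col' using sgT R' by unfold_locales
  show "contains_copy V E VT ET"
  proof (rule R3.embed[OF assms(2,3,5,6,7) _ cp])
    show "degree VT ET v \<le> \<Delta>" using md v by (simp add: max_degree_le_def)
    show "\<forall>w\<in>V - {x}. \<forall>b. card {y \<in> VT - {v}. c y = b} \<le> degree (V - {x}) E w"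
    proof (intro ballI allI)
      fix w b assume w: "w \<in> V - {x}"
      have "int (card {y \<in> VT - {v}. c y = b}) \<le> \<delta>" using c1 c2 by (cases b) auto
      moreover have "\<delta> \<le> int (degree (V - {x}) E w)" using degd w by blast
      ultimately have "int (card {y \<in> VT - {v}. c y = b}) \<le> int (degree (V - {x}) E w)" by linarith
      then show "card {y \<in> VT - {v}. c y = b} \<le> degree (V - {x}) E w" by (simp only: of_nat_le_iff)
    qed
  qed
qed


end
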